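(* Let $R$ be a unital associative algebra over an infinite field $F$, let $n>1$ be an integer, and let $p\in F[x]$ be a nonconstant polynomial. If $A\in\mathrm{M}_n(R)$ is similar (via an invertible matrix in $\mathrm{M}_n(R)$) to a matrix in $\mathrm{M}_n(R)$ all of whose diagonal entries are zero, then there exist $A_1,B_1\in\mathrm{M}_n(R)$ with $A=p(A_1B_1)-p(B_1A_1)$. *)

theory Defs
  imports "HOL-Analysis.Analysis" "HOL-Computational_Algebra.Polynomial"
begin

text \<open>A unital associative algebra R over a field F is represented by a unital ring
  type 'r together with the structure map phi : F -> R (c maps to c times 1), which is a
  unital ring homomorphism into the centre of R; scalar multiplication is c.r = phi c * r.\<close>
definition alg_struct :: "('f::field \<Rightarrow> 'r::ring_1) \<Rightarrow> bool" where
  "alg_struct \<phi> \<longleftrightarrow> \<phi> 1 = 1 \<and> (\<forall>a b. \<phi> (a + b) = \<phi> a + \<phi> b)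
     \<and> (\<forall>a b. \<phi> (a * b) = \<phi> a * \<phi> b) \<and> (\<forall>c r. \<phi> c * r = r * \<phi> c)"

fun mat_pow :: "'r::semiring_1^'n^'n \<Rightarrow> nat \<Rightarrow> 'r^'n^'n" where
  "mat_pow M 0 = mat 1"
| "mat_pow M (Suc k) = M ** mat_pow M k"

definition mat_scale :: "('f \<Rightarrow> 'r::ring_1) \<Rightarrow> 'f \<Rightarrow> 'r^'n^'m \<Rightarrow> 'r^'n^'m" where
  "mat_scale \<phi> c M = (\<chi> i j. \<phi> c * M $ i $ j)"

definition poly_mat :: "('f::field \<Rightarrow> 'r::ring_1) \<Rightarrow> 'f poly \<Rightarrow> 'r^'n^'n \<Rightarrow> 'r^'n^'n" where
  "poly_mat \<phi> p M = (\<Sum>i\<le>degree p. mat_scale \<phi> (coeff p i) (mat_pow M i))"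

end

theory Submission
  imports Defs
begin



lemma phi_add: "alg_struct \<phi> \<Longrightarrow> \<phi> (a + b) = \<phi> a + \<phi> b"
  unfolding alg_struct_def by blast
lemma phi_mult: "alg_struct \<phi> \<Longrightarrow> \<phi> (a * b) = \<phi> a * \<phi> b"
  unfolding alg_struct_def by blast
lemma phi_comm: "alg_struct \<phi> \<Longrightarrow> \<phi> c * r = r * \<phi> c"
  unfolding alg_struct_def by blast
lemma phi_1: "alg_struct \<phi> \<Longrightarrow> \<phi> 1 = 1"
  unfolding alg_struct_def by blast

lemma phi_0: "alg_struct \<phi> \<Longrightarrow> \<phi> 0 = 0"
proof -
  assume a: "alg_struct \<phi>"
  have "\<phi> (0 + 0) = \<phi> 0 + \<phi> 0" by (rule phi_add[OF a])
  then show ?thesis by simp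
qed
lemma phi_minus: "alg_struct \<phi> \<Longrightarrow> \<phi> (- a) = - \<phi> a"
proof -
  assume a: "alg_struct \<phi>"
  have "\<phi> (a + - a) = \<phi> a + \<phi> (- a)" by (rule phi_add[OF a])
  then have "\<phi> a + \<phi> (- a) = 0" using phi_0[OF a] by simp
  then have "- \<phi> a = \<phi> (- a)" by (rule minus_unique)
  then show ?thesis by simp
qed
lemma phi_diff: "alg_struct \<phi> \<Longrightarrow> \<phi> (a - b) = \<phi> a - \<phi> b"
proof -
  assume a: "alg_struct \<phi>"
  have "\<phi> (a + - b) = \<phi> a + \<phi> (- b)" by (rule phi_add[OF a])
  then show ?thesis by (simp add: phi_minus[OF a])
qed
lemma phi_sum: "alg_struct \<phi> \<Longrightarrow> \<phi> (sum f S) = (\<Sum>x\<in>S. \<phi> (f x))"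
  by (induction S rule: infinite_finite_induct) (auto simp: phi_0 phi_add)
lemma phi_power: "alg_struct \<phi> \<Longrightarrow> \<phi> (a ^ k) = \<phi> a ^ k"
  by (induction k) (auto simp: phi_1 phi_mult)
lemma phi_poly: "alg_struct \<phi> \<Longrightarrow> \<phi> (poly p a) = (\<Sum>i\<le>degree p. \<phi> (coeff p i) * \<phi> a ^ i)"
  by (simp add: poly_altdef phi_sum phi_mult phi_power)
lemma phi_inv: "alg_struct \<phi> \<Longrightarrow> c \<noteq> 0 \<Longrightarrow> \<phi> c * \<phi> (inverse c) = 1"
  by (simp add: phi_mult[symmetric] phi_1)

lemma mat_scale_left: "alg_struct \<phi> \<Longrightarrow> mat_scale \<phi> c (A ** B) = mat_scale \<phi> c A ** B"
  by (simp add: mat_scale_def matrix_matrix_mult_def vec_eq_iff sum_distrib_left mult.assoc)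
lemma mat_scale_right: "alg_struct \<phi> \<Longrightarrow> mat_scale \<phi> c (A ** B) = A ** mat_scale \<phi> c B"
proof -
  assume a: "alg_struct \<phi>"
  have "\<phi> c * (A$i$k * B$k$j) = A$i$k * (\<phi> c * B$k$j)" for i k j
    by (metis mult.assoc phi_comm[OF a])
  then show ?thesis
    by (simp add: mat_scale_def matrix_matrix_mult_def vec_eq_iff sum_distrib_left)
qed

lemma matrix_sum_ldistrib: "(A::'a::semiring_1^'n^'m) ** sum f S = (\<Sum>x\<in>S. A ** f x)"
  by (induction S rule: infinite_finite_induct) (auto simp: matrix_add_ldistrib)
lemma matrix_add_rdistrib': "((B + C)::'a::semiring_1^'n^'m) ** A = B ** A + C ** A"
  by (simp add: matrix_matrix_mult_def vec_eq_iff ring_distribs sum.distrib)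
lemma matrix_sum_rdistrib: "sum f S ** (A::'a::semiring_1^'n^'m) = (\<Sum>x\<in>S. f x ** A)"
  by (induction S rule: infinite_finite_induct) (auto simp: matrix_add_rdistrib')
lemma matrix_diff_ldistrib: "(A::'a::ring_1^'n^'m) ** (B - C) = A ** B - A ** C"
  by (simp add: matrix_matrix_mult_def vec_eq_iff ring_distribs sum_subtractf)
lemma matrix_diff_rdistrib: "((B - C)::'a::ring_1^'n^'m) ** A = B ** A - C ** A"
  by (simp add: matrix_matrix_mult_def vec_eq_iff ring_distribs sum_subtractf)

lemma mat_pow_conj:
  assumes "T ** T' = mat 1" "T' ** T = mat 1"
  shows "mat_pow (T ** Z ** T') k = T ** mat_pow Z k ** T'"
proof (induction k)
  case 0 then show ?case using assms by simp
next
  case (Suc k)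
  have "mat_pow (T ** Z ** T') (Suc k) = T ** Z ** T' ** (T ** mat_pow Z k ** T')"
    using Suc by simp
  also have "\<dots> = T ** Z ** (T' ** T) ** mat_pow Z k ** T'"
    by (simp add: matrix_mul_assoc)
  also have "\<dots> = T ** mat_pow Z (Suc k) ** T'" using assms by (simp add: matrix_mul_assoc)
  finally show ?case .
qed

lemma poly_mat_conj:
  assumes "alg_struct \<phi>" "T ** T' = mat 1" "T' ** T = mat 1"
  shows "poly_mat \<phi> p (T ** Z ** T') = T ** poly_mat \<phi> p Z ** T'"
proof -
  have "mat_scale \<phi> c (T ** M ** T') = T ** mat_scale \<phi> c M ** T'" for c M
    by (simp add: mat_scale_left[OF assms(1), symmetric] mat_scale_right[OF assms(1), symmetric])
  then show ?thesis
  unfolding poly_mat_def mat_pow_conj[OF assms(2,3)] matrix_sum_ldistrib matrix_sum_rdistrib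
    by simp
qed

lemma mat_pow_diag: "mat_pow (\<chi> i j. if i = j then d i else 0) k = (\<chi> i j. if i = j then d i ^ k else (0::'r::semiring_1))"
  by (induction k) (auto simp: vec_eq_iff mat_def matrix_matrix_mult_def if_distrib if_distribR sum.delta' cong: if_cong)

lemma poly_mat_diag:
  assumes "alg_struct \<phi>"
  shows "poly_mat \<phi> p (\<chi> i j. if i = j then \<phi> (m i) else 0) = (\<chi> i j. if i = j then \<phi> (poly p (m i)) else 0)"
  unfolding poly_mat_def mat_pow_diag
  by (auto simp: vec_eq_iff mat_scale_def phi_poly[OF assms] phi_0[OF assms] if_distrib if_distribR cong: if_cong)



primrec tri_rec :: "('n \<Rightarrow> nat) \<Rightarrow> ('n \<Rightarrow> 'n \<Rightarrow> 'r::ring_1) \<Rightarrow> ('n \<Rightarrow> 'n \<Rightarrow> 'r) \<Rightarrow> nat \<Rightarrow> 'n \<Rightarrow> 'n \<Rightarrow> 'r" where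
  "tri_rec \<iota> c B 0 i j = (if i = j then 1 else 0)"
| "tri_rec \<iota> c B (Suc d) i j = (if \<iota> i < \<iota> j \<and> \<iota> j - \<iota> i = Suc d
     then c i j * (\<Sum>k\<in>{k. \<iota> i < \<iota> k \<and> \<iota> k \<le> \<iota> j}. B i k * tri_rec \<iota> c B d k j)
     else tri_rec \<iota> c B d i j)"

lemma tri_diag: "tri_rec \<iota> c B d i i = 1"
  by (induction d) auto
lemma tri_low: "\<iota> j < \<iota> i \<Longrightarrow> tri_rec \<iota> c B d i j = 0"
  by (induction d) auto
lemma tri_stab: "\<iota> j - \<iota> i \<le> d \<Longrightarrow> tri_rec \<iota> c B (d + e) i j = tri_rec \<iota> c B d i j"
  by (induction e) auto

lemma tri_eq:
  assumes "\<iota> i < \<iota> j" "\<iota> j \<le> K"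
  shows "tri_rec \<iota> c B K i j = c i j * (\<Sum>k\<in>{k. \<iota> i < \<iota> k \<and> \<iota> k \<le> \<iota> j}. B i k * tri_rec \<iota> c B K k j)"
proof -
  define S where "S = {k. \<iota> i < \<iota> k \<and> \<iota> k \<le> \<iota> j}"
  obtain d where d: "\<iota> j - \<iota> i = Suc d" using assms(1)
    by (metis Suc_pred zero_less_diff)
  have K: "K = Suc d + (K - Suc d)" using d assms by arith
  have "tri_rec \<iota> c B K i j = tri_rec \<iota> c B (Suc d) i j"
    by (subst K, rule tri_stab) (use d in simp)
  also have "\<dots> = c i j * (\<Sum>k\<in>S. B i k * tri_rec \<iota> c B d k j)" using d assms by (simp add: S_def)
  also have "(\<Sum>k\<in>S. B i k * tri_rec \<iota> c B d k j) = (\<Sum>k\<in>S. B i k * tri_rec \<iota> c B K k j)"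
  proof (rule sum.cong[OF refl])
    fix k assume "k \<in> S" then have k: "\<iota> j - \<iota> k \<le> d" using d by (auto simp: S_def)
    then have "tri_rec \<iota> c B (d + (K - d)) k j = tri_rec \<iota> c B d k j" by (rule tri_stab)
    moreover have "d + (K-d) = K" using d assms by arith
    ultimately show "B i k * tri_rec \<iota> c B d k j = B i k * tri_rec \<iota> c B K k j" by simp
  qed
  finally show ?thesis by (simp add: S_def)
qed

definition unip :: "('n \<Rightarrow> nat) \<Rightarrow> 'r::ring_1^'n^'n \<Rightarrow> bool" where
  "unip \<iota> T \<longleftrightarrow> (\<forall>i. T$i$i = 1) \<and> (\<forall>i j. \<iota> j < \<iota> i \<longrightarrow> T$i$j = 0)"

lemma sum_UNIV_S: "(\<And>k. k \<notin> S \<Longrightarrow> f k = 0) \<Longrightarrow> sum f (UNIV::'n::finite set) = sum f S"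
  by (rule sum.mono_neutral_right) auto

lemma exists_K: "\<exists>K::nat. \<forall>i::'n::finite. (\<iota>::'n \<Rightarrow> nat) i \<le> K"
  by (rule exI[of _ "Max (range \<iota>)"]) simp

lemma unip_right_inv:
  fixes T :: "'r::ring_1^'n::finite^'n"
  assumes "inj \<iota>" "unip \<iota> T"
  shows "\<exists>T'. T ** T' = mat 1 \<and> unip \<iota> T'"
proof -
  obtain K where K: "\<And>i. \<iota> i \<le> K" using exists_K by blast
  define X where "X = tri_rec \<iota> (\<lambda>_ _. - 1) (\<lambda>i k. T$i$k) K"
  define T' :: "'r^'n^'n" where "T' = (\<chi> i j. X i j)"
  have T'u: "unip \<iota> T'" by (simp add: unip_def T'_def X_def tri_diag tri_low)
  have Tu: "T$i$i = 1" "\<iota> j < \<iota> i \<Longrightarrow> T$i$j = 0" for i j using assms(2) by (auto simp: unip_def)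
  have Tu': "T'$i$i = 1" "\<iota> j < \<iota> i \<Longrightarrow> T'$i$j = 0" for i j using T'u by (auto simp: unip_def)
  have "(T ** T')$i$j = mat 1 $ i $ j" for i j
  proof -
    define S where "S = {k. \<iota> i < \<iota> k \<and> \<iota> k \<le> \<iota> j}"
    have eq: "(T ** T')$i$j = T$i$i * T'$i$j + (\<Sum>k\<in>S. T$i$k * T'$k$j)"
    proof -
      have "(T ** T')$i$j = (\<Sum>k\<in>insert i S. T$i$k * T'$k$j)"
        unfolding matrix_matrix_mult_def
      proof (simp, rule sum_UNIV_S)
        fix k assume "k \<notin> insert i S"
        then have "k \<noteq> i" "\<not> (\<iota> i < \<iota> k \<and> \<iota> k \<le> \<iota> j)" by (auto simp: S_def)
        moreover have "\<iota> k \<noteq> \<iota> i" using \<open>k \<noteq> i\<close> assms(1) by (meson injD)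
        ultimately have "\<iota> k < \<iota> i \<or> \<iota> j < \<iota> k" by linarith
        then show "T$i$k * T'$k$j = 0" using Tu Tu' by auto
      qed
      also have "\<dots> = T$i$i * T'$i$j + (\<Sum>k\<in>S. T$i$k * T'$k$j)"
        by (subst sum.insert) (auto simp: S_def)
      finally show ?thesis .
    qed
    consider "i = j" | "\<iota> j < \<iota> i" | "\<iota> i < \<iota> j"
      using assms(1) by (metis injD linorder_neqE_nat)
    then show ?thesis
    proof cases
      case 1
      have "S = {}" using 1 by (auto simp: S_def)
      then show ?thesis using eq 1 Tu Tu' by (simp add: mat_def)
    next
      case 2
      have "S = {}" using 2 by (auto simp: S_def)
      moreover have "i \<noteq> j" using 2 by auto
      ultimately show ?thesis using eq 2 Tu Tu' by (simp add: mat_def)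
    next
      case 3
      have "T'$i$j = - 1 * (\<Sum>k\<in>S. T$i$k * T'$k$j)"
        unfolding T'_def X_def S_def
        using tri_eq[of \<iota> i j K "\<lambda>_ _. - 1" "\<lambda>i k. T$i$k", OF 3 K[of j]] by simp
      moreover have "i \<noteq> j" using 3 by auto
      ultimately show ?thesis using eq Tu by (simp add: mat_def)
    qed
  qed
  then have "T ** T' = mat 1" by (simp add: vec_eq_iff)
  then show ?thesis using T'u by blast
qed

lemma unip_inv:
  fixes T :: "'r::ring_1^'n::finite^'n"
  assumes "inj \<iota>" "unip \<iota> T"
  shows "\<exists>T'. T ** T' = mat 1 \<and> T' ** T = mat 1"
proof -
  obtain T' where T': "T ** T' = mat 1" "unip \<iota> T'" using unip_right_inv[OF assms] by blast
  obtain T'' where T'': "T' ** T'' = mat 1" using unip_right_inv[OF assms(1) T'(2)] by blast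
  have "T = T ** (T' ** T'')" using T'' by simp
  also have "\<dots> = T''" using T'(1) by (simp add: matrix_mul_assoc)
  finally show ?thesis using T' T'' by blast
qed

lemma sim_diag:
  fixes U :: "'r::ring_1^'n::finite^'n" and a :: "'n \<Rightarrow> 'f::field" and \<iota> :: "'n \<Rightarrow> nat"
  assumes phi: "alg_struct \<phi>" and "inj \<iota>" "inj a" and U: "\<And>i j. \<not> \<iota> i < \<iota> j \<Longrightarrow> U$i$j = 0"
  shows "\<exists>T T'. T ** T' = mat 1 \<and> T' ** T = mat 1 \<and>
     T ** (\<chi> i j. if i = j then \<phi> (a i) else 0) ** T' = (\<chi> i j. if i = j then \<phi> (a i) else 0) + U"
proof -
  define \<Lambda> :: "'r^'n^'n" where "\<Lambda> = (\<chi> i j. if i = j then \<phi> (a i) else 0)"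
  obtain K where K: "\<And>i. \<iota> i \<le> K" using exists_K by blast
  define c where "c i j = \<phi> (inverse (a j - a i))" for i j
  define X where "X = tri_rec \<iota> c (\<lambda>i k. U$i$k) K"
  define T :: "'r^'n^'n" where "T = (\<chi> i j. X i j)"
  have Tun: "unip \<iota> T" by (simp add: unip_def T_def X_def tri_diag tri_low)
  have Tu: "T$i$i = 1" "\<iota> j < \<iota> i \<Longrightarrow> T$i$j = 0" for i j using Tun by (auto simp: unip_def)
  have "((\<Lambda> + U) ** T)$i$j = (T ** \<Lambda>)$i$j" for i j
  proof -
    define S where "S = {k. \<iota> i < \<iota> k \<and> \<iota> k \<le> \<iota> j}"
    have s1: "(\<Sum>k\<in>UNIV. \<Lambda>$i$k * T$k$j) = \<phi> (a i) * T$i$j"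
      by (simp add: \<Lambda>_def if_distrib if_distribR sum.delta cong: if_cong)
    have s2: "(\<Sum>k\<in>UNIV. U$i$k * T$k$j) = (\<Sum>k\<in>S. U$i$k * T$k$j)"
    proof (rule sum_UNIV_S)
      fix k assume "k \<notin> S"
      then have "\<not> \<iota> i < \<iota> k \<or> \<iota> j < \<iota> k" by (auto simp: S_def)
      then show "U$i$k * T$k$j = 0" using U Tu by auto
    qed
    have s3: "(\<Sum>k\<in>UNIV. T$i$k * \<Lambda>$k$j) = T$i$j * \<phi> (a j)"
      by (simp add: \<Lambda>_def if_distrib if_distribR sum.delta' cong: if_cong)
    have lhs: "((\<Lambda> + U) ** T)$i$j = \<phi> (a i) * T$i$j + (\<Sum>k\<in>S. U$i$k * T$k$j)"
      using s1 s2 by (simp add: matrix_matrix_mult_def ring_distribs sum.distrib)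
    have rhs: "(T ** \<Lambda>)$i$j = T$i$j * \<phi> (a j)"
      using s3 by (simp add: matrix_matrix_mult_def)
    consider "i = j" | "\<iota> j < \<iota> i" | "\<iota> i < \<iota> j"
      using assms(2) by (metis injD linorder_neqE_nat)
    then show ?thesis
    proof cases
      case 1
      have "S = {}" using 1 by (auto simp: S_def)
      then show ?thesis using lhs rhs 1 Tu by simp
    next
      case 2
      have "S = {}" using 2 by (auto simp: S_def)
      then show ?thesis using lhs rhs 2 Tu by simp
    next
      case 3
      define Y where "Y = (\<Sum>k\<in>S. U$i$k * T$k$j)"
      have TY: "T$i$j = c i j * Y"
        unfolding T_def X_def Y_def S_def using tri_eq[of \<iota> i j K c "\<lambda>i k. U$i$k", OF 3 K[of j]] by simp
      have "i \<noteq> j" using 3 by auto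
      then have "a j \<noteq> a i" using assms(3) unfolding inj_def by blast
      then have ne: "a j - a i \<noteq> 0" by simp
      have one: "\<phi> (a j) * c i j - \<phi> (a i) * c i j = 1"
        using phi_inv[OF phi ne] by (simp add: c_def phi_diff[OF phi] left_diff_distrib)
      have "T$i$j * \<phi> (a j) = \<phi> (a j) * T$i$j" by (rule phi_comm[OF phi, symmetric])
      also have "\<dots> = \<phi> (a j) * c i j * Y" by (simp add: TY mult.assoc)
      also have "\<phi> (a j) * c i j = 1 + \<phi> (a i) * c i j" using one by (simp add: algebra_simps)
      finally have "T$i$j * \<phi> (a j) = Y + \<phi> (a i) * T$i$j"
        by (simp add: TY ring_distribs mult.assoc)
      then show ?thesis using lhs rhs Y_def by (simp add: add.commute)
    qed
  qed
  then have comm: "(\<Lambda> + U) ** T = T ** \<Lambda>" by (simp add: vec_eq_iff)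
  obtain T' where T': "T ** T' = mat 1" "T' ** T = mat 1" using unip_inv[OF assms(2) Tun] by blast
  have "T ** \<Lambda> ** T' = (\<Lambda> + U) ** T ** T'" by (simp add: comm)
  also have "\<dots> = \<Lambda> + U" using T' by (simp add: matrix_mul_assoc[symmetric])
  finally show ?thesis using T' unfolding \<Lambda>_def by blast
qed



lemma exists_inj_nat: "\<exists>\<iota>::'n::finite \<Rightarrow> nat. inj \<iota>"
proof -
  have "finite (UNIV :: 'n set)" by simp
  then obtain h :: "'n \<Rightarrow> nat" where "bij_betw h UNIV {0..<card (UNIV :: 'n set)}"
    by (rule ex_bij_betw_finite_nat[THEN exE])
  then have "inj h" by (simp add: bij_betw_def)
  then show ?thesis by blast
qed

lemma poly_range_infinite:
  fixes p :: "'f::field poly"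
  assumes "infinite (UNIV :: 'f set)" "degree p > 0"
  shows "infinite (range (poly p))"
proof
  assume fin: "finite (range (poly p))"
  have eq: "UNIV = (\<Union>y\<in>range (poly p). {x. poly (p - [:y:]) x = 0})"
  proof (rule set_eqI)
    fix x
    have "x \<in> {z. poly (p - [:poly p x:]) z = 0}" by simp
    then have "x \<in> (\<Union>y\<in>range (poly p). {x. poly (p - [:y:]) x = 0})"
      by (rule UN_I[OF rangeI])
    then show "x \<in> UNIV \<longleftrightarrow> x \<in> (\<Union>y\<in>range (poly p). {x. poly (p - [:y:]) x = 0})" by simp
  qed
  have "finite {x. poly (p - [:y:]) x = 0}" for y
  proof (rule poly_roots_finite)
    show "p - [:y:] \<noteq> 0"
    proof
      assume "p - [:y:] = 0"
      then have "p = [:y:]" by simp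
      then show False using assms(2) by simp
    qed
  qed
  then have fU: "finite (\<Union>y\<in>range (poly p). {x. poly (p - [:y:]) x = 0})"
    by (intro finite_UN_I[OF fin])
  have "finite (UNIV :: 'f set)" using fU by (simp only: eq[symmetric])
  then show False using assms(1) by simp
qed

lemma exists_m:
  fixes p :: "'f::field poly"
  assumes "infinite (UNIV :: 'f set)" "degree p > 0" "inj (\<iota> :: 'n \<Rightarrow> nat)"
  shows "\<exists>m :: 'n \<Rightarrow> 'f. inj (\<lambda>i. poly p (m i))"
proof -
  obtain f :: "nat \<Rightarrow> 'f" where f: "inj f" "range f \<subseteq> range (poly p)"
    using infinite_countable_subset[OF poly_range_infinite[OF assms(1,2)]] by blast
  define m where "m i = (SOME x. poly p x = f (\<iota> i))" for i
  have "poly p (m i) = f (\<iota> i)" for i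
  proof -
    have "f (\<iota> i) \<in> range (poly p)" using f(2) by (rule subsetD) simp
    then obtain x where "f (\<iota> i) = poly p x" by (rule rangeE)
    then have "\<exists>x. poly p x = f (\<iota> i)" by metis
    then show ?thesis unfolding m_def by (rule someI_ex)
  qed
  then have e: "(\<lambda>i. poly p (m i)) = f \<circ> \<iota>" by auto
  have "inj (f \<circ> \<iota>)" by (rule inj_compose[OF f(1) assms(3)])
  then have "inj (\<lambda>i. poly p (m i))" by (simp only: e)
  then show ?thesis by blast
qed

theorem theorem3p4:
  fixes \<phi> :: "'f::field \<Rightarrow> 'r::ring_1"
    and p :: "'f poly"
    and A :: "'r^'n::finite^'n"
  assumes "infinite (UNIV :: 'f set)"
    and "alg_struct \<phi>"
    and "CARD('n) > 1"
    and "degree p > 0"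
    and "\<exists>P P' D :: 'r^'n^'n. P ** P' = mat 1 \<and> P' ** P = mat 1 \<and> (\<forall>i. D $ i $ i = 0)
                 \<and> A = P ** D ** P'"
  shows "\<exists>A1 B1. A = poly_mat \<phi> p (A1 ** B1) - poly_mat \<phi> p (B1 ** A1)"
proof -
  note phi = assms(2)
  obtain P P' D :: "'r^'n^'n" where PP: "P ** P' = mat 1" "P' ** P = mat 1"
    and D0: "\<And>i. D $ i $ i = 0" and A: "A = P ** D ** P'" using assms(5) by blast
  obtain \<iota> :: "'n \<Rightarrow> nat" where inj: "inj \<iota>" using exists_inj_nat by blast
  obtain m :: "'n \<Rightarrow> 'f" where injm: "inj (\<lambda>i. poly p (m i))"
    using exists_m[OF assms(1,4) inj] by blast
  define a where "a i = poly p (m i)" for i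
  have inja: "inj a" using injm by (simp add: a_def[abs_def])
  obtain K where K: "\<And>i. \<iota> i \<le> K" using exists_K by blast
  define \<iota>2 where "\<iota>2 i = K - \<iota> i" for i
  have ord2: "\<iota>2 i < \<iota>2 j \<longleftrightarrow> \<iota> j < \<iota> i" for i j using K[of i] K[of j] by (auto simp: \<iota>2_def)
  have inj2: "inj \<iota>2"
  proof (rule injI)
    fix x y assume "\<iota>2 x = \<iota>2 y" then have "\<iota> x = \<iota> y" using K[of x] K[of y] by (auto simp: \<iota>2_def)
    then show "x = y" using inj by (meson injD)
  qed
  define \<Lambda> :: "'r^'n^'n" where "\<Lambda> = (\<chi> i j. if i = j then \<phi> (a i) else 0)"
  define U :: "'r^'n^'n" where "U = (\<chi> i j. if \<iota> i < \<iota> j then D$i$j else 0)"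
  define L :: "'r^'n^'n" where "L = (\<chi> i j. if \<iota> j < \<iota> i then - D$i$j else 0)"
  have Uu: "\<And>i j. \<not> \<iota> i < \<iota> j \<Longrightarrow> U$i$j = 0" by (simp add: U_def)
  have Lu: "\<And>i j. \<not> \<iota>2 i < \<iota>2 j \<Longrightarrow> L$i$j = 0" by (simp add: L_def ord2)
  obtain T T' where T: "T ** T' = mat 1" "T' ** T = mat 1" "T ** \<Lambda> ** T' = \<Lambda> + U"
    using sim_diag[OF phi inj inja Uu] unfolding \<Lambda>_def by blast
  obtain V V' where V: "V ** V' = mat 1" "V' ** V = mat 1" "V ** \<Lambda> ** V' = \<Lambda> + L"
    using sim_diag[OF phi inj2 inja Lu] unfolding \<Lambda>_def by blast
  define Md :: "'r^'n^'n" where "Md = (\<chi> i j. if i = j then \<phi> (m i) else 0)"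
  have pM: "poly_mat \<phi> p Md = \<Lambda>"
    unfolding Md_def \<Lambda>_def a_def by (rule poly_mat_diag[OF phi])
  define A1 where "A1 = T ** Md ** V'"
  define B1 where "B1 = V ** T'"
  have AB: "A1 ** B1 = T ** Md ** T'"
  proof -
    have "A1 ** B1 = T ** Md ** (V' ** V) ** T'" by (simp add: A1_def B1_def matrix_mul_assoc)
    then show ?thesis using V by simp
  qed
  have BA: "B1 ** A1 = V ** Md ** V'"
  proof -
    have "B1 ** A1 = V ** (T' ** T) ** Md ** V'" by (simp add: A1_def B1_def matrix_mul_assoc)
    then show ?thesis using T by simp
  qed
  have DD: "poly_mat \<phi> p (A1 ** B1) - poly_mat \<phi> p (B1 ** A1) = D"
  proof -
    have "poly_mat \<phi> p (A1 ** B1) - poly_mat \<phi> p (B1 ** A1) = (\<Lambda> + U) - (\<Lambda> + L)"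
      unfolding AB BA poly_mat_conj[OF phi T(1,2)] poly_mat_conj[OF phi V(1,2)] pM T(3) V(3) ..
    also have "\<dots> = D"
    proof -
      have "((\<Lambda> + U) - (\<Lambda> + L))$i$j = D$i$j" for i j
      proof (cases "i = j")
        case True then show ?thesis using D0 by (simp add: U_def L_def)
      next
        case False
        then have "\<iota> i \<noteq> \<iota> j" using inj by (meson injD)
        then show ?thesis by (auto simp: U_def L_def)
      qed
      then show ?thesis by (simp add: vec_eq_iff)
    qed
    finally show ?thesis .
  qed
  define X where "X = P ** A1 ** P'"
  define Y where "Y = P ** B1 ** P'"
  have XY: "X ** Y = P ** (A1 ** B1) ** P'"
  proof -
    have "X ** Y = P ** A1 ** (P' ** P) ** B1 ** P'" by (simp add: X_def Y_def matrix_mul_assoc)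
    then show ?thesis using PP by (simp add: matrix_mul_assoc)
  qed
  have YX: "Y ** X = P ** (B1 ** A1) ** P'"
  proof -
    have "Y ** X = P ** B1 ** (P' ** P) ** A1 ** P'" by (simp add: X_def Y_def matrix_mul_assoc)
    then show ?thesis using PP by (simp add: matrix_mul_assoc)
  qed
  have "poly_mat \<phi> p (X ** Y) - poly_mat \<phi> p (Y ** X)
      = P ** (poly_mat \<phi> p (A1 ** B1) - poly_mat \<phi> p (B1 ** A1)) ** P'"
    unfolding XY YX poly_mat_conj[OF phi PP] matrix_diff_ldistrib matrix_diff_rdistrib ..
  also have "\<dots> = A" using DD A by simp
  finally have "A = poly_mat \<phi> p (X ** Y) - poly_mat \<phi> p (Y ** X)" by (rule sym)
  then show ?thesis by blast
qed

end
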